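(* Let $k\in\mathbb{N}$. For any three polygonal curves $\sigma$, $\tau$, $\upsilon$ in $\mathbb{R}^d$ (of arbitrary, possibly different, complexities) it holds that $$d_{k\text{-}DTW}(\sigma,\tau)\le k\cdot\big(d_{k\text{-}DTW}(\sigma,\upsilon)+d_{k\text{-}DTW}(\upsilon,\tau)\big).$$ This bound is tight, i.e., there exist curves $\sigma,\tau,\upsilon$ for which equality holds. Further, there is no constant $c>0$ independent of $k$ and of the complexities of the curves such that $d_{k\text{-}DTW}(\sigma,\tau)\le c\cdot\big(d_{k\text{-}DTW}(\sigma,\upsilon)+d_{k\text{-}DTW}(\upsilon,\tau)\big)$ holds for all triples of curves.
   Context: A polygonal curve of complexity $m$ in $\mathbb{R}^d$ is identified with its sequence of vertices $(w_1,\dots,w_m)$, $w_i\in\mathbb{R}^d$. For curves $\sigma=(v_1,\dots,v_{m'})$ and $\tau=(w_1,\dots,w_{m''})$, a traversal $T$ is a sequence of index pairs $(i,j)$ that starts with $(1,1)$, ends with $(m',m'')$, and in which each pair $(i,j)$ is followed only by $(i+1,j)$, $(i,j+1)$ or $(i+1,j+1)$; $\mathcal{T}$ denotes the set of all traversals. For a traversal $T$ let $s^{(T)}_1\ge s^{(T)}_2\ge\dots\ge s^{(T)}_{|T|}$ be the Euclidean distances $\|v_i-w_j\|$ over the pairs $(i,j)\in T$ sorted non-increasingly, and set $s^{(T)}_l=0$ for $l>|T|$. The $k$-DTW distance is $d_{k\text{-}DTW}(\sigma,\tau)=\min_{T\in\mathcal{T}}\sum_{l=1}^k s^{(T)}_l$.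 *)

theory Defs
  imports "HOL-Analysis.Analysis"
begin

text \<open>A polygonal curve of complexity m is the list of its m vertices (m = length, m >= 1).
  Indices of traversals are 1-based, as in the paper.\<close>

definition traversals :: "nat \<Rightarrow> nat \<Rightarrow> (nat \<times> nat) list set" where
  "traversals m1 m2 = {T. T \<noteq> [] \<and> hd T = (1, 1) \<and> last T = (m1, m2) \<and>
      (\<forall>l. Suc l < length T \<longrightarrow>
         T ! Suc l \<in> {(Suc (fst (T ! l)), snd (T ! l)),
                      (fst (T ! l), Suc (snd (T ! l))),
                      (Suc (fst (T ! l)), Suc (snd (T ! l)))})}"

text \<open>Sum of the k largest distances along a traversal (missing entries count as 0).\<close>
definition ktrav_cost :: "nat \<Rightarrow> 'a::euclidean_space list \<Rightarrow> 'a list \<Rightarrow> (nat \<times> nat) list \<Rightarrow> real" where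
  "ktrav_cost k \<sigma> \<tau> T =
     sum_list (take k (rev (sort (map (\<lambda>(i, j). dist (\<sigma> ! (i - 1)) (\<tau> ! (j - 1))) T))))"

definition kDTW :: "nat \<Rightarrow> 'a::euclidean_space list \<Rightarrow> 'a list \<Rightarrow> real" where
  "kDTW k \<sigma> \<tau> = Min (ktrav_cost k \<sigma> \<tau> ` traversals (length \<sigma>) (length \<tau>))"

end

theory Submission imports Defs begin

definition stp :: "nat \<times> nat \<Rightarrow> nat \<times> nat \<Rightarrow> bool" where
  "stp p q \<longleftrightarrow> q \<in> {(Suc (fst p), snd p), (fst p, Suc (snd p)), (Suc (fst p), Suc (snd p))}"

definition adj :: "(nat \<times> nat) list \<Rightarrow> bool" where
  "adj T \<longleftrightarrow> (\<forall>l. Suc l < length T \<longrightarrow> stp (T ! l) (T ! Suc l))"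

lemma traversals_alt: "traversals m1 m2 = {T. T \<noteq> [] \<and> hd T = (1,1) \<and> last T = (m1,m2) \<and> adj T}"
  unfolding traversals_def adj_def stp_def by auto

lemma adj_Nil[simp]: "adj []" by (simp add: adj_def)

lemma adj_Cons: "adj (p#T) \<longleftrightarrow> (T \<noteq> [] \<longrightarrow> stp p (hd T)) \<and> adj T"
proof
  assume a: "adj (p#T)"
  show "(T \<noteq> [] \<longrightarrow> stp p (hd T)) \<and> adj T"
  proof (intro conjI impI)
    assume "T \<noteq> []" then show "stp p (hd T)"
      using a[unfolded adj_def, rule_format, of 0] by (simp add: hd_conv_nth)
  next
    show "adj T" unfolding adj_def
    proof (intro allI impI)
      fix l assume "Suc l < length T" then show "stp (T!l) (T!Suc l)"
        using a[unfolded adj_def, rule_format, of "Suc l"] by simp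
    qed
  qed
next
  assume b: "(T \<noteq> [] \<longrightarrow> stp p (hd T)) \<and> adj T"
  show "adj (p#T)" unfolding adj_def
  proof (intro allI impI)
    fix l assume l: "Suc l < length (p#T)"
    show "stp ((p#T)!l) ((p#T)!Suc l)"
    proof (cases l)
      case 0 then show ?thesis using b l by (auto simp add: hd_conv_nth)
    next
      case (Suc l') then show ?thesis using b l by (simp add: adj_def)
    qed
  qed
qed

lemma adj_bounds: "adj T \<Longrightarrow> T \<noteq> [] \<Longrightarrow> x \<in> set T \<Longrightarrow>
  fst (hd T) \<le> fst x \<and> snd (hd T) \<le> snd x \<and> fst x \<le> fst (last T) \<and> snd x \<le> snd (last T)"
proof (induction T arbitrary: x)
  case Nil thus ?case by simp
next
  case (Cons p T)
  show ?case
  proof (cases "T = []")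
    case True with Cons show ?thesis by simp
  next
    case False
    have st: "stp p (hd T)" and aT: "adj T" using Cons.prems False by (auto simp: adj_Cons)
    have h: "fst (hd T) \<le> fst y \<and> snd (hd T) \<le> snd y \<and> fst y \<le> fst (last T) \<and> snd y \<le> snd (last T)"
      if "y \<in> set T" for y using Cons.IH[OF aT False that] .
    have p: "fst p \<le> fst (hd T) \<and> snd p \<le> snd (hd T)" using st by (auto simp: stp_def)
    have "hd T \<in> set T" using False by simp
    from h[OF this] p h Cons.prems False show ?thesis by fastforce
  qed
qed

lemma adj_len: "adj T \<Longrightarrow> T \<noteq> [] \<Longrightarrow>
  fst (hd T) + snd (hd T) + length T \<le> fst (last T) + snd (last T) + 1"
proof (induction T)
  case Nil thus ?case by simp
next
  case (Cons p T)
  show ?case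
  proof (cases "T = []")
    case True with Cons show ?thesis by simp
  next
    case False
    have st: "stp p (hd T)" and aT: "adj T" using Cons.prems False by (auto simp: adj_Cons)
    have "fst p + snd p + 1 \<le> fst (hd T) + snd (hd T)" using st by (auto simp: stp_def)
    with Cons.IH[OF aT False] False show ?thesis by simp
  qed
qed

lemma adj_len2: "adj T \<Longrightarrow> T \<noteq> [] \<Longrightarrow> snd (last T) + 1 \<le> snd (hd T) + length T"
proof (induction T)
  case Nil thus ?case by simp
next
  case (Cons p T)
  show ?case
  proof (cases "T = []")
    case True with Cons show ?thesis by simp
  next
    case False
    have st: "stp p (hd T)" and aT: "adj T" using Cons.prems False by (auto simp: adj_Cons)
    have "snd (hd T) \<le> snd p + 1" using st by (auto simp: stp_def)
    with Cons.IH[OF aT False] False show ?thesis by simp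
  qed
qed

lemma trav_exists_aux: "(m1 - i) + (m2 - j) = n \<Longrightarrow> i \<le> m1 \<Longrightarrow> j \<le> m2 \<Longrightarrow>
  \<exists>T. T \<noteq> [] \<and> adj T \<and> hd T = (i,j) \<and> last T = (m1,m2)"
proof (induction n arbitrary: i j)
  case 0
  then show ?case by (intro exI[of _ "[(i,j)]"]) (auto simp: adj_Cons)
next
  case (Suc n)
  show ?case
  proof (cases "i < m1")
    case True
    then obtain T where T: "T \<noteq> [] \<and> adj T \<and> hd T = (Suc i,j) \<and> last T = (m1,m2)"
      using Suc.IH[of "Suc i" j] Suc.prems by fastforce
    then show ?thesis by (intro exI[of _ "(i,j)#T"]) (auto simp: adj_Cons stp_def)
  next
    case False
    then have "j < m2" using Suc.prems by auto
    then obtain T where T: "T \<noteq> [] \<and> adj T \<and> hd T = (i,Suc j) \<and> last T = (m1,m2)"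
      using Suc.IH[of i "Suc j"] Suc.prems by fastforce
    then show ?thesis by (intro exI[of _ "(i,j)#T"]) (auto simp: adj_Cons stp_def)
  qed
qed

lemma trav_nonempty: "1 \<le> m1 \<Longrightarrow> 1 \<le> m2 \<Longrightarrow> traversals m1 m2 \<noteq> {}"
  using trav_exists_aux[OF refl, of 1 m1 1 m2] unfolding traversals_alt by auto

lemma trav_finite: "finite (traversals m1 m2)"
proof -
  have "traversals m1 m2 \<subseteq> {T. set T \<subseteq> {0..m1} \<times> {0..m2} \<and> length T \<le> m1 + m2}"
  proof
    fix T assume "T \<in> traversals m1 m2"
    then have T: "T \<noteq> []" "hd T = (1,1)" "last T = (m1,m2)" "adj T" unfolding traversals_alt by auto
    have "set T \<subseteq> {0..m1} \<times> {0..m2}"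
      using adj_bounds[OF T(4) T(1)] T(3) by fastforce
    moreover have "length T \<le> m1 + m2" using adj_len[OF T(4) T(1)] T(2,3) by simp
    ultimately show "T \<in> {T. set T \<subseteq> {0..m1} \<times> {0..m2} \<and> length T \<le> m1 + m2}" by simp
  qed
  then show ?thesis by (rule finite_subset) (intro finite_lists_length_le, simp)
qed

lemma comp_aux: "length T1 + length T2 = n \<Longrightarrow> adj T1 \<Longrightarrow> adj T2 \<Longrightarrow> T1 \<noteq> [] \<Longrightarrow> T2 \<noteq> [] \<Longrightarrow>
  hd T1 = (i,l) \<Longrightarrow> hd T2 = (l,j) \<Longrightarrow> last T1 = (m1,m2) \<Longrightarrow> last T2 = (m2,m3) \<Longrightarrow>
  \<exists>T. T \<noteq> [] \<and> adj T \<and> hd T = (i,j) \<and> last T = (m1,m3) \<and>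
      (\<forall>a b. (a,b) \<in> set T \<longrightarrow> (\<exists>c. (a,c) \<in> set T1 \<and> (c,b) \<in> set T2))"
proof (induction n arbitrary: T1 T2 i l j rule: less_induct)
  case (less n)
  obtain U1 where T1: "T1 = (i,l)#U1" using less.prems by (cases T1) auto
  obtain U2 where T2: "T2 = (l,j)#U2" using less.prems by (cases T2) auto
  have aU1: "adj U1" and s1: "U1 \<noteq> [] \<Longrightarrow> stp (i,l) (hd U1)" using less.prems T1 by (auto simp: adj_Cons)
  have aU2: "adj U2" and s2: "U2 \<noteq> [] \<Longrightarrow> stp (l,j) (hd U2)" using less.prems T2 by (auto simp: adj_Cons)
  show ?case
  proof (cases "U1 \<noteq> [] \<and> hd U1 = (Suc i, l)")
    case True
    obtain T' where T': "T' \<noteq> [] \<and> adj T' \<and> hd T' = (Suc i, j) \<and> last T' = (m1,m3) \<and>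
        (\<forall>a b. (a,b)\<in>set T' \<longrightarrow> (\<exists>c. (a,c)\<in>set U1 \<and> (c,b)\<in>set T2))"
      using less.IH[of "length U1 + length T2" U1 T2 "Suc i" l j] True less.prems T1 aU1 by auto
    show ?thesis
      apply (rule exI[of _ "(i,j)#T'"]) using T' T1 T2 by (auto simp: adj_Cons stp_def)
  next
    case B1: False
    show ?thesis
    proof (cases "U2 \<noteq> [] \<and> hd U2 = (l, Suc j)")
      case True
      obtain T' where T': "T' \<noteq> [] \<and> adj T' \<and> hd T' = (i, Suc j) \<and> last T' = (m1,m3) \<and>
          (\<forall>a b. (a,b)\<in>set T' \<longrightarrow> (\<exists>c. (a,c)\<in>set T1 \<and> (c,b)\<in>set U2))"
        using less.IH[of "length T1 + length U2" T1 U2 i l "Suc j"] True less.prems T2 aU2 by auto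
      show ?thesis
        apply (rule exI[of _ "(i,j)#T'"]) using T' T1 T2 by (auto simp: adj_Cons stp_def)
    next
      case B2: False
      show ?thesis
      proof (cases "U1 = []")
        case True
        then have im: "i = m1" "l = m2" using less.prems T1 by auto
        have "U2 = []"
        proof (rule ccontr)
          assume ne: "U2 \<noteq> []"
          then have "stp (l,j) (hd U2)" using s2 by auto
          with B2 ne have "fst (hd U2) = Suc l" by (auto simp: stp_def)
          moreover have "fst (hd U2) \<le> m2" using adj_bounds[of T2 "hd U2"] less.prems T2 ne by auto
          ultimately show False using im by simp
        qed
        then show ?thesis using True less.prems T1 T2
          by (intro exI[of _ "[(i,j)]"]) (auto simp: adj_Cons)
      next
        case F1: False
        have ne2: "U2 \<noteq> []"
        proof
          assume "U2 = []"
          then have lm: "l = m2" using less.prems T2 by auto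
          have "stp (i,l) (hd U1)" using s1 F1 by auto
          with B1 F1 have "snd (hd U1) = Suc l" by (auto simp: stp_def)
          moreover have "snd (hd U1) \<le> m2" using adj_bounds[of T1 "hd U1"] less.prems T1 F1 by auto
          ultimately show False using lm by simp
        qed
        obtain i' where hU1: "hd U1 = (i', Suc l)" "i' = i \<or> i' = Suc i"
          using s1 F1 B1 by (auto simp: stp_def)
        obtain j' where hU2: "hd U2 = (Suc l, j')" "j' = j \<or> j' = Suc j"
          using s2 ne2 B2 by (auto simp: stp_def)
        obtain T' where T': "T' \<noteq> [] \<and> adj T' \<and> hd T' = (i', j') \<and> last T' = (m1,m3) \<and>
            (\<forall>a b. (a,b)\<in>set T' \<longrightarrow> (\<exists>c. (a,c)\<in>set U1 \<and> (c,b)\<in>set U2))"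
          using less.IH[of "length U1 + length U2" U1 U2 i' "Suc l" j'] F1 ne2 hU1 hU2 less.prems T1 T2 aU1 aU2
          by auto
        show ?thesis
        proof (cases "i' = i \<and> j' = j")
          case True
          show ?thesis
            apply (rule exI[of _ T']) using T' T1 T2 True by fastforce
        next
          case False
          show ?thesis
            apply (rule exI[of _ "(i,j)#T'"]) using T' T1 T2 False hU1(2) hU2(2) by (auto simp: adj_Cons stp_def)
        qed
      qed
    qed
  qed
qed

lemma sum_list_le_len: "(\<forall>x\<in>set ys. x \<le> (M::real)) \<Longrightarrow> sum_list ys \<le> real (length ys) * M"
  by (induction ys) (auto simp: algebra_simps)

lemma topk_le: "(\<forall>x\<in>set xs. x \<le> (M::real)) \<Longrightarrow> 0 \<le> M \<Longrightarrow> sum_list (take k (rev (sort xs))) \<le> real k * M"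
proof -
  assume a: "\<forall>x\<in>set xs. x \<le> M" and M: "0 \<le> M"
  have "\<forall>x\<in>set (take k (rev (sort xs))). x \<le> M" using a by (auto dest: in_set_takeD)
  then have "sum_list (take k (rev (sort xs))) \<le> real (length (take k (rev (sort xs)))) * M"
    by (rule sum_list_le_len)
  also have "\<dots> \<le> real k * M" using M by (intro mult_right_mono) auto
  finally show ?thesis .
qed

lemma topk_nonneg: "(\<forall>x\<in>set xs. 0 \<le> (x::real)) \<Longrightarrow> 0 \<le> sum_list (take k (rev (sort xs)))"
  by (intro sum_list_nonneg) (auto dest: in_set_takeD)

lemma topk_ge: "1 \<le> k \<Longrightarrow> (\<forall>x\<in>set xs. 0 \<le> (x::real)) \<Longrightarrow> x \<in> set xs \<Longrightarrow> x \<le> sum_list (take k (rev (sort xs)))"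
proof -
  assume k: "1 \<le> k" and nn: "\<forall>x\<in>set xs. 0 \<le> (x::real)" and x: "x \<in> set xs"
  have "rev (sort xs) \<noteq> []" using x by (metis empty_iff list.set(1) set_rev set_sort)
  then obtain y ys where r: "rev (sort xs) = y # ys" by (cases "rev (sort xs)") auto
  have "sorted_wrt (\<ge>) (rev (sort xs))" by (simp add: sorted_wrt_rev)
  then have "\<forall>z\<in>set ys. z \<le> y" using r by simp
  moreover have "x \<in> set (y#ys)" using x r by (metis set_rev set_sort)
  ultimately have xy: "x \<le> y" by auto
  obtain k' where kk: "k = Suc k'" using k by (cases k) auto
  have "\<forall>z\<in>set ys. 0 \<le> z" using nn r by (metis list.set_intros(2) set_rev set_sort)
  then have "0 \<le> sum_list (take k' ys)" by (intro sum_list_nonneg) (auto dest: in_set_takeD)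
  then show ?thesis using xy r kk by simp
qed

lemma topk_const: "(\<forall>x\<in>set xs. x = (c::real)) \<Longrightarrow> sum_list (take k (rev (sort xs))) = real (min k (length xs)) * c"
proof -
  assume a: "\<forall>x\<in>set xs. x = c"
  have "rev (sort xs) = replicate (length xs) c"
    using replicate_length_same[of "rev (sort xs)" c] a by simp
  then show ?thesis by (simp add: sum_list_replicate)
qed


lemma kDTW_le: "T \<in> traversals (length \<sigma>) (length \<tau>) \<Longrightarrow> kDTW k \<sigma> \<tau> \<le> ktrav_cost k \<sigma> \<tau> T"
  unfolding kDTW_def by (intro Min_le finite_imageI trav_finite imageI)

lemma kDTW_attained: "\<sigma> \<noteq> [] \<Longrightarrow> \<tau> \<noteq> [] \<Longrightarrow> \<exists>T \<in> traversals (length \<sigma>) (length \<tau>). kDTW k \<sigma> \<tau> = ktrav_cost k \<sigma> \<tau> T"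
proof -
  assume a: "\<sigma> \<noteq> []" "\<tau> \<noteq> []"
  have "1 \<le> length \<sigma>" "1 \<le> length \<tau>" using a by (cases \<sigma>, simp, simp, cases \<tau>, simp, simp)
  then have ne: "traversals (length \<sigma>) (length \<tau>) \<noteq> {}" by (rule trav_nonempty)
  have "kDTW k \<sigma> \<tau> \<in> ktrav_cost k \<sigma> \<tau> ` traversals (length \<sigma>) (length \<tau>)"
    unfolding kDTW_def by (intro Min_in finite_imageI trav_finite) (simp add: ne)
  then show ?thesis by (rule imageE) blast
qed

lemma kDTW_const: "\<sigma> \<noteq> [] \<Longrightarrow> \<tau> \<noteq> [] \<Longrightarrow> (\<forall>T \<in> traversals (length \<sigma>) (length \<tau>). ktrav_cost k \<sigma> \<tau> T = c)
   \<Longrightarrow> kDTW k \<sigma> \<tau> = c"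
proof -
  assume a: "\<sigma> \<noteq> []" "\<tau> \<noteq> []" and c: "\<forall>T \<in> traversals (length \<sigma>) (length \<tau>). ktrav_cost k \<sigma> \<tau> T = c"
  from kDTW_attained[OF a, of k] obtain T where "T \<in> traversals (length \<sigma>) (length \<tau>)" "kDTW k \<sigma> \<tau> = ktrav_cost k \<sigma> \<tau> T" by blast
  with c show ?thesis by simp
qed

lemma cost_nonneg: "0 \<le> ktrav_cost k \<sigma> \<tau> T"
  unfolding ktrav_cost_def by (rule topk_nonneg) (auto simp: split_beta)

lemma upper: "\<sigma> \<noteq> [] \<Longrightarrow> \<tau> \<noteq> [] \<Longrightarrow> \<upsilon> \<noteq> [] \<Longrightarrow>
  kDTW k \<sigma> \<tau> \<le> real k * (kDTW k \<sigma> \<upsilon> + kDTW k \<upsilon> \<tau>)"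
proof -
  assume ne: "\<sigma> \<noteq> []" "\<tau> \<noteq> []" "\<upsilon> \<noteq> []"
  obtain T1 where T1: "T1 \<in> traversals (length \<sigma>) (length \<upsilon>)" "kDTW k \<sigma> \<upsilon> = ktrav_cost k \<sigma> \<upsilon> T1"
    using kDTW_attained[OF ne(1,3)] by blast
  obtain T2 where T2: "T2 \<in> traversals (length \<upsilon>) (length \<tau>)" "kDTW k \<upsilon> \<tau> = ktrav_cost k \<upsilon> \<tau> T2"
    using kDTW_attained[OF ne(3,2)] by blast
  have T1a: "T1 \<noteq> []" "hd T1 = (1,1)" "last T1 = (length \<sigma>, length \<upsilon>)" "adj T1"
    using T1(1) unfolding traversals_alt by simp_all
  have T2a: "T2 \<noteq> []" "hd T2 = (1,1)" "last T2 = (length \<upsilon>, length \<tau>)" "adj T2"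
    using T2(1) unfolding traversals_alt by simp_all
  obtain T where T: "T \<noteq> []" "adj T" "hd T = (1,1)" "last T = (length \<sigma>, length \<tau>)"
     and Tc: "\<forall>a b. (a,b) \<in> set T \<longrightarrow> (\<exists>c. (a,c) \<in> set T1 \<and> (c,b) \<in> set T2)"
    using comp_aux[OF refl T1a(4) T2a(4) T1a(1) T2a(1) T1a(2) T2a(2) T1a(3) T2a(3)] by blast
  have Tt: "T \<in> traversals (length \<sigma>) (length \<tau>)" using T unfolding traversals_alt by simp
  define M where "M = kDTW k \<sigma> \<upsilon> + kDTW k \<upsilon> \<tau>"
  have M0: "0 \<le> M" unfolding M_def T1(2) T2(2) using cost_nonneg[of k \<sigma> \<upsilon> T1] cost_nonneg[of k \<upsilon> \<tau> T2] by linarith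
  show ?thesis
  proof (cases "k = 0")
    case True
    then show ?thesis using kDTW_le[OF Tt, of k] by (simp add: ktrav_cost_def)
  next
    case False
    then have k1: "1 \<le> k" by simp
    have "\<forall>x\<in>set (map (\<lambda>(i, j). dist (\<sigma> ! (i - 1)) (\<tau> ! (j - 1))) T). x \<le> M"
    proof
      fix x assume "x \<in> set (map (\<lambda>(i, j). dist (\<sigma> ! (i - 1)) (\<tau> ! (j - 1))) T)"
      then obtain p where p: "p \<in> set T" "x = (\<lambda>(i, j). dist (\<sigma> ! (i - 1)) (\<tau> ! (j - 1))) p" by auto
      obtain a b where pab: "p = (a,b)" by (cases p)
      have ab: "(a,b) \<in> set T" "x = dist (\<sigma> ! (a - 1)) (\<tau> ! (b - 1))" using p pab by simp_all
      then obtain c where c: "(a,c) \<in> set T1" "(c,b) \<in> set T2" using Tc by blast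
      have m1: "dist (\<sigma> ! (a - 1)) (\<upsilon> ! (c - 1)) \<in> set (map (\<lambda>(i, j). dist (\<sigma> ! (i - 1)) (\<upsilon> ! (j - 1))) T1)"
        using c(1) by force
      have m2: "dist (\<upsilon> ! (c - 1)) (\<tau> ! (b - 1)) \<in> set (map (\<lambda>(i, j). dist (\<upsilon> ! (i - 1)) (\<tau> ! (j - 1))) T2)"
        using c(2) by force
      have "dist (\<sigma> ! (a - 1)) (\<upsilon> ! (c - 1)) \<le> kDTW k \<sigma> \<upsilon>"
        unfolding T1(2) ktrav_cost_def by (rule topk_ge[OF k1 _ m1]) (auto simp: split_beta)
      moreover have "dist (\<upsilon> ! (c - 1)) (\<tau> ! (b - 1)) \<le> kDTW k \<upsilon> \<tau>"
        unfolding T2(2) ktrav_cost_def by (rule topk_ge[OF k1 _ m2]) (auto simp: split_beta)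
      ultimately show "x \<le> M" unfolding M_def ab(2)
        using dist_triangle[of "\<sigma> ! (a - 1)" "\<tau> ! (b - 1)" "\<upsilon> ! (c - 1)"] by linarith
    qed
    then have "ktrav_cost k \<sigma> \<tau> T \<le> real k * M" unfolding ktrav_cost_def using M0 by (rule topk_le)
    then show ?thesis using kDTW_le[OF Tt, of k] unfolding M_def by linarith
  qed
qed


lemma cost_const: "(\<forall>x\<in>set (map f T). x = c) \<Longrightarrow> sum_list (take k (rev (sort (map f T)))) = real (min k (length T)) * (c::real)"
  using topk_const[of "map f T" c k] by simp

lemma trav_props: "T \<in> traversals m1 m2 \<Longrightarrow> x \<in> set T \<Longrightarrow>
   1 \<le> fst x \<and> fst x \<le> m1 \<and> 1 \<le> snd x \<and> snd x \<le> m2"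
  unfolding traversals_alt using adj_bounds[of T x] by auto

lemma trav_len: "T \<in> traversals m1 m2 \<Longrightarrow> m2 \<le> length T \<and> length T + 1 \<le> m1 + m2"
  unfolding traversals_alt using adj_len[of T] adj_len2[of T] by auto

lemma tight:
  fixes e :: "'a::euclidean_space"
  assumes k: "1 \<le> k" and e: "norm e = 1"
  shows "kDTW k [0::'a] (replicate k e) = real k" "kDTW k [0::'a] [e] = 1" "kDTW k [e] (replicate k e) = 0"
proof -
  have nek: "replicate k e \<noteq> []" using k by simp
  show "kDTW k [0::'a] (replicate k e) = real k"
  proof (rule kDTW_const)
    show "\<forall>T\<in>traversals (length [0::'a]) (length (replicate k e)). ktrav_cost k [0] (replicate k e) T = real k"
    proof
      fix T assume T: "T \<in> traversals (length [0::'a]) (length (replicate k e))"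
      have "\<forall>x\<in>set (map (\<lambda>(i, j). dist ([0::'a] ! (i - 1)) (replicate k e ! (j - 1))) T). x = 1"
      proof
        fix x assume "x \<in> set (map (\<lambda>(i, j). dist ([0::'a] ! (i - 1)) (replicate k e ! (j - 1))) T)"
        then obtain p where p: "p \<in> set T" "x = (\<lambda>(i, j). dist ([0::'a] ! (i - 1)) (replicate k e ! (j - 1))) p" by auto
        have "1 \<le> fst p \<and> fst p \<le> 1 \<and> 1 \<le> snd p \<and> snd p \<le> k" using trav_props[OF T p(1)] by simp
        then show "x = 1" using p(2) e by (auto simp: split_beta dist_norm)
      qed
      then have "ktrav_cost k [0] (replicate k e) T = real (min k (length T)) * 1"
        unfolding ktrav_cost_def by (rule cost_const)
      moreover have "k \<le> length T" using trav_len[OF T] by simp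
      ultimately show "ktrav_cost k [0] (replicate k e) T = real k" by simp
    qed
  qed (use nek in simp_all)
  show "kDTW k [0::'a] [e] = 1"
  proof (rule kDTW_const)
    show "\<forall>T\<in>traversals (length [0::'a]) (length [e]). ktrav_cost k [0] [e] T = 1"
    proof
      fix T assume T: "T \<in> traversals (length [0::'a]) (length [e])"
      have "\<forall>x\<in>set (map (\<lambda>(i, j). dist ([0::'a] ! (i - 1)) ([e] ! (j - 1))) T). x = 1"
      proof
        fix x assume "x \<in> set (map (\<lambda>(i, j). dist ([0::'a] ! (i - 1)) ([e] ! (j - 1))) T)"
        then obtain p where p: "p \<in> set T" "x = (\<lambda>(i, j). dist ([0::'a] ! (i - 1)) ([e] ! (j - 1))) p" by auto
        have "1 \<le> fst p \<and> fst p \<le> 1 \<and> 1 \<le> snd p \<and> snd p \<le> 1" using trav_props[OF T p(1)] by simp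
        then show "x = 1" using p(2) e by (auto simp: split_beta dist_norm)
      qed
      then have "ktrav_cost k [0] [e] T = real (min k (length T)) * 1"
        unfolding ktrav_cost_def by (rule cost_const)
      moreover have "length T = 1" using trav_len[OF T] by simp
      ultimately show "ktrav_cost k [0] [e] T = 1" using k by simp
    qed
  qed simp_all
  show "kDTW k [e] (replicate k e) = 0"
  proof (rule kDTW_const)
    show "\<forall>T\<in>traversals (length [e]) (length (replicate k e)). ktrav_cost k [e] (replicate k e) T = 0"
    proof
      fix T assume T: "T \<in> traversals (length [e]) (length (replicate k e))"
      have "\<forall>x\<in>set (map (\<lambda>(i, j). dist ([e] ! (i - 1)) (replicate k e ! (j - 1))) T). x = 0"
      proof
        fix x assume "x \<in> set (map (\<lambda>(i, j). dist ([e] ! (i - 1)) (replicate k e ! (j - 1))) T)"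
        then obtain p where p: "p \<in> set T" "x = (\<lambda>(i, j). dist ([e] ! (i - 1)) (replicate k e ! (j - 1))) p" by auto
        have "1 \<le> fst p \<and> fst p \<le> 1 \<and> 1 \<le> snd p \<and> snd p \<le> k" using trav_props[OF T p(1)] by simp
        then show "x = 0" using p(2) by (auto simp: split_beta)
      qed
      then have "ktrav_cost k [e] (replicate k e) T = real (min k (length T)) * 0"
        unfolding ktrav_cost_def by (rule cost_const)
      then show "ktrav_cost k [e] (replicate k e) T = 0" by simp
    qed
  qed (use nek in simp_all)
qed

lemma unit_exists: "\<exists>e::'a::euclidean_space. norm e = 1"
proof -
  obtain b :: 'a where "b \<in> Basis" using nonempty_Basis by blast
  then show ?thesis by (intro exI[of _ b]) simp
qed

lemma tight_ex: "1 \<le> k \<Longrightarrow> \<exists>(\<sigma>::'a::euclidean_space list) \<tau> \<upsilon>.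
            \<sigma> \<noteq> [] \<and> \<tau> \<noteq> [] \<and> \<upsilon> \<noteq> [] \<and> kDTW k \<sigma> \<tau> > 0 \<and>
            kDTW k \<sigma> \<tau> = real k * (kDTW k \<sigma> \<upsilon> + kDTW k \<upsilon> \<tau>)"
proof -
  assume k: "1 \<le> k"
  obtain e :: 'a where e: "norm e = 1" using unit_exists by blast
  show ?thesis
    apply (rule exI[of _ "[0::'a]"], rule exI[of _ "replicate k e"], rule exI[of _ "[e]"])
    using tight[OF k e] k by simp
qed

theorem lemma2p3:
  shows "(\<forall>(k::nat) (\<sigma>::'a::euclidean_space list) \<tau> \<upsilon>.
            \<sigma> \<noteq> [] \<and> \<tau> \<noteq> [] \<and> \<upsilon> \<noteq> [] \<longrightarrow>
            kDTW k \<sigma> \<tau> \<le> real k * (kDTW k \<sigma> \<upsilon> + kDTW k \<upsilon> \<tau>))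
       \<and> (\<forall>k::nat. k \<ge> 1 \<longrightarrow> (\<exists>(\<sigma>::'a list) \<tau> \<upsilon>.
            \<sigma> \<noteq> [] \<and> \<tau> \<noteq> [] \<and> \<upsilon> \<noteq> [] \<and> kDTW k \<sigma> \<tau> > 0 \<and>
            kDTW k \<sigma> \<tau> = real k * (kDTW k \<sigma> \<upsilon> + kDTW k \<upsilon> \<tau>)))
       \<and> \<not> (\<exists>c::real. c > 0 \<and> (\<forall>(k::nat) (\<sigma>::'a list) \<tau> \<upsilon>.
            \<sigma> \<noteq> [] \<and> \<tau> \<noteq> [] \<and> \<upsilon> \<noteq> [] \<longrightarrow>
            kDTW k \<sigma> \<tau> \<le> c * (kDTW k \<sigma> \<upsilon> + kDTW k \<upsilon> \<tau>)))"
proof (intro conjI)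
  show "\<forall>(k::nat) (\<sigma>::'a::euclidean_space list) \<tau> \<upsilon>.
            \<sigma> \<noteq> [] \<and> \<tau> \<noteq> [] \<and> \<upsilon> \<noteq> [] \<longrightarrow>
            kDTW k \<sigma> \<tau> \<le> real k * (kDTW k \<sigma> \<upsilon> + kDTW k \<upsilon> \<tau>)"
    using upper by blast
  show "\<forall>k::nat. k \<ge> 1 \<longrightarrow> (\<exists>(\<sigma>::'a list) \<tau> \<upsilon>.
            \<sigma> \<noteq> [] \<and> \<tau> \<noteq> [] \<and> \<upsilon> \<noteq> [] \<and> kDTW k \<sigma> \<tau> > 0 \<and>
            kDTW k \<sigma> \<tau> = real k * (kDTW k \<sigma> \<upsilon> + kDTW k \<upsilon> \<tau>))"
    using tight_ex by blast
  show "\<not> (\<exists>c::real. c > 0 \<and> (\<forall>(k::nat) (\<sigma>::'a list) \<tau> \<upsilon>.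
            \<sigma> \<noteq> [] \<and> \<tau> \<noteq> [] \<and> \<upsilon> \<noteq> [] \<longrightarrow>
            kDTW k \<sigma> \<tau> \<le> c * (kDTW k \<sigma> \<upsilon> + kDTW k \<upsilon> \<tau>)))"
  proof
    assume "\<exists>c::real. c > 0 \<and> (\<forall>(k::nat) (\<sigma>::'a list) \<tau> \<upsilon>.
            \<sigma> \<noteq> [] \<and> \<tau> \<noteq> [] \<and> \<upsilon> \<noteq> [] \<longrightarrow>
            kDTW k \<sigma> \<tau> \<le> c * (kDTW k \<sigma> \<upsilon> + kDTW k \<upsilon> \<tau>))"
    then obtain c :: real where c: "c > 0" and H: "\<And>k (\<sigma>::'a list) \<tau> \<upsilon>.
            \<sigma> \<noteq> [] \<and> \<tau> \<noteq> [] \<and> \<upsilon> \<noteq> [] \<Longrightarrow>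
            kDTW k \<sigma> \<tau> \<le> c * (kDTW k \<sigma> \<upsilon> + kDTW k \<upsilon> \<tau>)" by blast
    define k where "k = nat \<lceil>c\<rceil> + 1"
    have k1: "1 \<le> k" unfolding k_def by simp
    have kc: "c < real k" unfolding k_def by linarith
    obtain \<sigma> \<tau> \<upsilon> :: "'a list" where s: "\<sigma> \<noteq> []" "\<tau> \<noteq> []" "\<upsilon> \<noteq> []" "kDTW k \<sigma> \<tau> > 0"
      "kDTW k \<sigma> \<tau> = real k * (kDTW k \<sigma> \<upsilon> + kDTW k \<upsilon> \<tau>)"
      using tight_ex[OF k1] by blast
    define S where "S = kDTW k \<sigma> \<upsilon> + kDTW k \<upsilon> \<tau>"
    have "0 < real k * S" using s(4,5) unfolding S_def by simp
    then have S0: "0 < S" using k1 by (simp add: zero_less_mult_iff)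
    have "real k * S \<le> c * S" using H[of \<sigma> \<tau> \<upsilon> k] s unfolding S_def by simp
    then have "real k \<le> c" using S0 by simp
    with kc show False by simp
  qed
qed

end
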